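(* There exists a family of connected bipartite graphs $(G_N)_{N\ge 4}$ with $|V(G_N)|=N$, $\Delta(G_N)\le N-2<N-1$, and $\hat r_\infty(G_N)\to 1$ as $N\to\infty$.
   Context: All graphs are finite and simple; a graph is nonempty if it has at least one edge. $\Delta$ is maximum degree, $tK_2$ is a matching with $t$ edges. For graphs $F,G,H$, $F\to(G,H)$ means every red--blue coloring of $E(F)$ contains a red copy of $G$ or a blue copy of $H$, and $\hat r(G,H)=\min\{|E(F)|:F\to(G,H)\}$. For a nonempty graph $G$, $\hat r_\infty(G)=\lim_{t\to\infty}\frac{\hat r(tK_2,G)}{t\,|E(G)|}$ (this limit exists). *)

theory Defs
  imports Complex_Main
begin

type_synonym 'a graph = "'a set \<times> 'a set set"

definition verts :: "'a graph \<Rightarrow> 'a set" where "verts G = fst G"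
definition edges :: "'a graph \<Rightarrow> 'a set set" where "edges G = snd G"

definition simple_graph :: "'a graph \<Rightarrow> bool" where
  "simple_graph G \<longleftrightarrow> finite (verts G) \<and>
     (\<forall>e\<in>edges G. \<exists>u v. e = {u, v} \<and> u \<noteq> v \<and> u \<in> verts G \<and> v \<in> verts G)"

definition degree :: "'a graph \<Rightarrow> 'a \<Rightarrow> nat" where
  "degree G v = card {e \<in> edges G. v \<in> e}"

definition max_degree :: "'a graph \<Rightarrow> nat" where
  "max_degree G = Max (insert 0 (degree G ` verts G))"

definition adj_rel :: "'a graph \<Rightarrow> ('a \<times> 'a) set" where
  "adj_rel G = {(u, v). {u, v} \<in> edges G}"

definition connected_graph :: "'a graph \<Rightarrow> bool" where
  "connected_graph G \<longleftrightarrow> verts G \<noteq> {} \<and>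
     (\<forall>u\<in>verts G. \<forall>v\<in>verts G. (u, v) \<in> (adj_rel G)\<^sup>*)"

definition bipartite :: "'a graph \<Rightarrow> bool" where
  "bipartite G \<longleftrightarrow> (\<exists>A \<subseteq> verts G. \<forall>e\<in>edges G. card (e \<inter> A) = 1)"

definition has_copy :: "'b graph \<Rightarrow> 'a set \<Rightarrow> 'a set set \<Rightarrow> bool" where
  "has_copy H V' E' \<longleftrightarrow> (\<exists>f. inj_on f (verts H) \<and> f ` verts H \<subseteq> V' \<and>
      (\<forall>e\<in>edges H. f ` e \<in> E'))"

text \<open>F \<rightarrow> (G, H): every red-blue colouring (R = red edges) gives red G or blue H.\<close>
definition arrows :: "'a graph \<Rightarrow> 'b graph \<Rightarrow> 'c graph \<Rightarrow> bool" where
  "arrows F G H \<longleftrightarrow> (\<forall>R \<subseteq> edges F.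
      has_copy G (verts F) R \<or> has_copy H (verts F) (edges F - R))"

text \<open>Size Ramsey number; host graphs F range over finite simple graphs on
  natural-number vertices (every finite graph has such an isomorphic copy).\<close>
definition size_ramsey :: "'b graph \<Rightarrow> 'c graph \<Rightarrow> nat" where
  "size_ramsey G H = (LEAST m. \<exists>F :: nat graph. simple_graph F \<and> arrows F G H \<and>
      card (edges F) = m)"

definition matching :: "nat \<Rightarrow> nat graph" where
  "matching t = ({0..<2*t}, {{2*i, 2*i+1} | i. i < t})"

definition r_infty :: "'a graph \<Rightarrow> real" where
  "r_infty G = lim (\<lambda>t. real (size_ramsey (matching t) G) / (real t * real (card (edges G))))"

end

theory Submission
  imports Defs
begin

definition mset_ok :: "nat set \<Rightarrow> nat set set \<Rightarrow> nat set set \<Rightarrow> nat \<Rightarrow> bool" where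
  "mset_ok V E M t \<longleftrightarrow> M \<subseteq> E \<and> finite M \<and> card M = t \<and>
     (\<forall>e\<in>M. \<exists>a b. e = {a, b} \<and> a \<noteq> b \<and> a \<in> V \<and> b \<in> V) \<and>
     (\<forall>e\<in>M. \<forall>e'\<in>M. e \<noteq> e' \<longrightarrow> e \<inter> e' = {})"

lemma matching_verts: "verts (matching t) = {0..<2*t}"
  by (simp add: matching_def verts_def)
lemma matching_edges: "edges (matching t) = {{2*i, 2*i+1} | i. i < t}"
  by (simp add: matching_def edges_def)

lemma copy_to_mset:
  assumes "has_copy (matching t) V E"
  shows "\<exists>M. mset_ok V E M t"
proof -
  obtain f where inj: "inj_on f {0..<2*t}" and sub: "f ` {0..<2*t} \<subseteq> V"
    and ed0: "\<forall>e\<in>{{2*i, 2*i+1} | i. i < t}. f ` e \<in> E"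
  proof -
    obtain f where "inj_on f (verts (matching t)) \<and> f ` verts (matching t) \<subseteq> V \<and> (\<forall>e\<in>edges (matching t). f ` e \<in> E)"
      using assms unfolding has_copy_def by blast
    then show ?thesis using that unfolding matching_verts matching_edges by blast
  qed
  have ed: "\<forall>i<t. f ` {2*i, 2*i+1} \<in> E" using ed0 by blast
  define g where "g i = {f (2*i), f (2*i+1)}" for i
  have fne: "f (2*i) \<noteq> f (2*i+1)" if "i < t" for i
    using inj_onD[OF inj, of "2*i" "2*i+1"] that by auto
  have key: "g i \<inter> g j = {}" if "i < t" "j < t" "i \<noteq> j" for i j
  proof -
    have "f x \<noteq> f y" if "x \<in> {2*i, 2*i+1}" "y \<in> {2*j, 2*j+1}" for x y
    proof
      assume "f x = f y"
      moreover have "x \<in> {0..<2*t}" "y \<in> {0..<2*t}" using that \<open>i<t\<close> \<open>j<t\<close> by auto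
      ultimately have "x = y" using inj_onD[OF inj] by blast
      then show False using that \<open>i \<noteq> j\<close> by auto
    qed
    then show ?thesis unfolding g_def by auto
  qed
  have injg: "inj_on g {..<t}"
  proof (rule inj_onI)
    fix i j assume "i \<in> {..<t}" "j \<in> {..<t}" "g i = g j"
    then show "i = j" using key[of i j] by (auto simp: g_def)
  qed
  have "mset_ok V E (g ` {..<t}) t"
    unfolding mset_ok_def
  proof (intro conjI ballI impI)
    show "g ` {..<t} \<subseteq> E" using ed by (auto simp: g_def)
    show "card (g ` {..<t}) = t" using card_image[OF injg] by simp
  next
    fix e assume "e \<in> g ` {..<t}"
    then obtain i where i: "i < t" "e = g i" by auto
    then have "2*i \<in> {0..<2*t}" "2*i+1 \<in> {0..<2*t}" by auto
    then show "\<exists>a b. e = {a, b} \<and> a \<noteq> b \<and> a \<in> V \<and> b \<in> V"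
      using i fne sub unfolding g_def by blast
  next
    fix e e' assume "e \<in> g ` {..<t}" "e' \<in> g ` {..<t}" "e \<noteq> e'"
    then show "e \<inter> e' = {}" using key by auto
  qed simp
  then show ?thesis by blast
qed

lemma mset_to_copy:
  assumes "mset_ok V E M t"
  shows "has_copy (matching t) V E"
proof -
  have fin: "finite M" and cM: "card M = t" and ME: "M \<subseteq> E"
    and two: "\<forall>e\<in>M. \<exists>a b. e = {a, b} \<and> a \<noteq> b \<and> a \<in> V \<and> b \<in> V"
    and dj: "\<forall>e\<in>M. \<forall>e'\<in>M. e \<noteq> e' \<longrightarrow> e \<inter> e' = {}"
    using assms unfolding mset_ok_def by blast+
  obtain h where h: "bij_betw h {..<t} M"
    using ex_bij_betw_nat_finite[OF fin] cM lessThan_atLeast0 by metis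
  define pa where "pa e = (SOME p. e = {fst p, snd p} \<and> fst p \<noteq> snd p \<and> fst p \<in> V \<and> snd p \<in> V)" for e
  have pa: "e = {fst (pa e), snd (pa e)} \<and> fst (pa e) \<noteq> snd (pa e) \<and> fst (pa e) \<in> V \<and> snd (pa e) \<in> V"
    if "e \<in> M" for e
  proof -
    have "\<exists>a b. e = {a, b} \<and> a \<noteq> b \<and> a \<in> V \<and> b \<in> V" using two that by (rule bspec)
    then obtain a b where "e = {a, b} \<and> a \<noteq> b \<and> a \<in> V \<and> b \<in> V" by (elim exE)
    then have "\<exists>p. e = {fst p, snd p} \<and> fst p \<noteq> snd p \<and> fst p \<in> V \<and> snd p \<in> V"
      by (intro exI[of _ "(a,b)"]) auto
    then show ?thesis unfolding pa_def by (rule someI_ex)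
  qed
  define f where "f x = (if even x then fst (pa (h (x div 2))) else snd (pa (h (x div 2))))" for x
  have hM: "h i \<in> M" if "i < t" for i using h that by (auto simp: bij_betw_def)
  have fin_h: "f x \<in> h (x div 2)" if "x < 2*t" for x
  proof -
    have "x div 2 < t" using that by auto
    then show ?thesis using pa[OF hM] unfolding f_def by (cases "even x") (metis insertI1 insertI2 singletonI)+
  qed
  have "inj_on f {0..<2*t}"
  proof (rule inj_onI)
    fix x y assume x: "x \<in> {0..<2*t}" and y: "y \<in> {0..<2*t}" and fxy: "f x = f y"
    have "x div 2 = y div 2"
    proof (rule ccontr)
      assume ne: "x div 2 \<noteq> y div 2"
      have "x div 2 < t" "y div 2 < t" using x y by auto
      then have "h (x div 2) \<noteq> h (y div 2)" using ne h by (auto simp: bij_betw_def inj_on_def)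
      then have "h (x div 2) \<inter> h (y div 2) = {}" using dj hM \<open>x div 2 < t\<close> \<open>y div 2 < t\<close> by blast
      then show False using fin_h[of x] fin_h[of y] x y fxy by auto
    qed
    moreover have "x div 2 < t" using x by auto
    moreover have "even x = even y"
    proof (rule ccontr)
      assume "even x \<noteq> even y"
      then have "fst (pa (h (x div 2))) = snd (pa (h (x div 2)))"
        using fxy \<open>x div 2 = y div 2\<close> unfolding f_def by (cases "even x") auto
      then show False using pa[OF hM[OF \<open>x div 2 < t\<close>]] by simp
    qed
    ultimately show "x = y"
      by (metis div_mult_mod_eq mod2_eq_if)
  qed
  moreover have "f ` {0..<2*t} \<subseteq> V"
  proof
    fix y assume "y \<in> f ` {0..<2*t}"
    then obtain x where "x < 2*t" "y = f x" by auto
    then have "x div 2 < t" by auto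
    then show "y \<in> V" using pa[OF hM] \<open>y = f x\<close> unfolding f_def by auto
  qed
  moreover have "f ` {2*i, 2*i+1} \<in> E" if "i < t" for i
  proof -
    have "f ` {2*i, 2*i+1} = {fst (pa (h i)), snd (pa (h i))}" unfolding f_def by auto
    also have "\<dots> = h i" using pa[OF hM[OF that]] by simp
    finally show ?thesis using hM[OF that] ME by auto
  qed
  ultimately show ?thesis unfolding has_copy_def matching_verts matching_edges by blast
qed

lemma copy_iff_mset: "has_copy (matching t) V E \<longleftrightarrow> (\<exists>M. mset_ok V E M t)"
  using copy_to_mset mset_to_copy by blast


lemma inj_imageI: "inj g \<Longrightarrow> inj (image g)"
  by (rule injI) (simp add: inj_image_eq_iff)

lemma simple_finite_edges: "simple_graph F \<Longrightarrow> finite (edges F)"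
proof -
  assume s: "simple_graph F"
  have "edges F \<subseteq> Pow (verts F)"
  proof
    fix e assume "e \<in> edges F"
    moreover have "\<forall>e\<in>edges F. \<exists>u v. e = {u, v} \<and> u \<noteq> v \<and> u \<in> verts F \<and> v \<in> verts F"
      using s unfolding simple_graph_def by (elim conjE)
    ultimately have "\<exists>u v. e = {u, v} \<and> u \<noteq> v \<and> u \<in> verts F \<and> v \<in> verts F" by (rule bspec[rotated])
    then show "e \<in> Pow (verts F)" by (elim exE conjE) simp
  qed
  moreover have "finite (verts F)" using s unfolding simple_graph_def by (elim conjE)
  ultimately show ?thesis by (meson finite_Pow_iff finite_subset)
qed

lemma has_copy_mono:
  assumes "has_copy H V E" "V \<subseteq> V'" "E \<subseteq> E'"
  shows "has_copy H V' E'"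
proof -
  obtain f where f: "inj_on f (verts H)" "f ` verts H \<subseteq> V" "\<forall>e\<in>edges H. f ` e \<in> E"
    using assms(1) unfolding has_copy_def by blast
  have "f ` verts H \<subseteq> V'" using f(2) assms(2) by (rule subset_trans)
  moreover have "\<forall>e\<in>edges H. f ` e \<in> E'" using f(3) assms(3) by auto
  ultimately show ?thesis using f(1) unfolding has_copy_def by (intro exI[of _ f] conjI)
qed

lemma has_copy_image:
  assumes "has_copy H V E" "inj g"
  shows "has_copy H (g ` V) (image g ` E)"
proof -
  obtain f where f: "inj_on f (verts H)" "f ` verts H \<subseteq> V" "\<forall>e\<in>edges H. f ` e \<in> E"
    using assms(1) unfolding has_copy_def by blast
  have "inj_on (g \<circ> f) (verts H)" using f(1) assms(2) by (simp add: comp_inj_on inj_on_subset)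
  moreover have "(g \<circ> f) ` verts H \<subseteq> g ` V" using f(2) by (auto simp: image_comp[symmetric])
  moreover have "\<forall>e\<in>edges H. (g \<circ> f) ` e \<in> image g ` E"
  proof
    fix e assume "e \<in> edges H"
    then have "g ` (f ` e) \<in> image g ` E" using f(3) by blast
    then show "(g \<circ> f) ` e \<in> image g ` E" by (simp add: image_comp)
  qed
  ultimately show ?thesis unfolding has_copy_def by blast
qed

lemma mset_okI:
  assumes "M \<subseteq> E" "finite M" "card M = t"
    "\<forall>e\<in>M. \<exists>a b. e = {a, b} \<and> a \<noteq> b \<and> a \<in> V \<and> b \<in> V"
    "\<forall>e\<in>M. \<forall>e'\<in>M. e \<noteq> e' \<longrightarrow> e \<inter> e' = {}"
  shows "mset_ok V E M t"
  using assms unfolding mset_ok_def by (intro conjI)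

lemma mset_ok_mono: "mset_ok V E M t \<Longrightarrow> V \<subseteq> V' \<Longrightarrow> E \<subseteq> E' \<Longrightarrow> mset_ok V' E' M t"
  unfolding mset_ok_def by (elim conjE, intro conjI) (assumption | fast)+

lemma mset_ok_image:
  assumes "mset_ok V E M t" "inj g"
  shows "mset_ok (g ` V) (image g ` E) (image g ` M) t"
proof -
  have M: "M \<subseteq> E" "finite M" "card M = t"
    and two: "\<forall>e\<in>M. \<exists>a b. e = {a, b} \<and> a \<noteq> b \<and> a \<in> V \<and> b \<in> V"
    and dj: "\<forall>e\<in>M. \<forall>e'\<in>M. e \<noteq> e' \<longrightarrow> e \<inter> e' = {}"
    using assms(1) unfolding mset_ok_def by blast+
  have ig: "inj (image g)" using inj_imageI[OF assms(2)] .
  have "card (image g ` M) = t" using card_image[OF inj_on_subset[OF ig]] M by auto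
  moreover have "\<forall>e\<in>image g ` M. \<exists>a b. e = {a, b} \<and> a \<noteq> b \<and> a \<in> g ` V \<and> b \<in> g ` V"
  proof
    fix e assume "e \<in> image g ` M"
    then obtain e0 where e0: "e0 \<in> M" "e = g ` e0" by blast
    have "\<exists>a b. e0 = {a, b} \<and> a \<noteq> b \<and> a \<in> V \<and> b \<in> V" using two e0(1) by (rule bspec)
    then obtain a b where "e0 = {a, b}" "a \<noteq> b" "a \<in> V" "b \<in> V" by (elim exE conjE)
    then have "e = {g a, g b} \<and> g a \<noteq> g b \<and> g a \<in> g ` V \<and> g b \<in> g ` V"
      using e0(2) assms(2) by (auto simp: inj_eq)
    then show "\<exists>a b. e = {a, b} \<and> a \<noteq> b \<and> a \<in> g ` V \<and> b \<in> g ` V" by (intro exI)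
  qed
  moreover have "\<forall>e\<in>image g ` M. \<forall>e'\<in>image g ` M. e \<noteq> e' \<longrightarrow> e \<inter> e' = {}"
  proof (intro ballI impI)
    fix e e' assume "e \<in> image g ` M" "e' \<in> image g ` M" "e \<noteq> e'"
    then obtain e0 e0' where "e0 \<in> M" "e0' \<in> M" "e = g ` e0" "e' = g ` e0'" "e0 \<noteq> e0'" by blast
    then have "e0 \<inter> e0' = {}" using dj by blast
    then show "e \<inter> e' = {}" using \<open>e = g ` e0\<close> \<open>e' = g ` e0'\<close> assms(2)
      by (simp add: image_Int[symmetric])
  qed
  moreover have "image g ` M \<subseteq> image g ` E" using M by blast
  ultimately show ?thesis using M by (intro mset_okI) auto
qed

lemma mset_ok_union:
  assumes "mset_ok V1 E1 M1 s" "mset_ok V2 E2 M2 t" "V1 \<inter> V2 = {}"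
  shows "mset_ok (V1 \<union> V2) (E1 \<union> E2) (M1 \<union> M2) (s + t)"
proof -
  have A: "M1 \<subseteq> E1" "finite M1" "card M1 = s"
    and two1: "\<forall>e\<in>M1. \<exists>a b. e = {a, b} \<and> a \<noteq> b \<and> a \<in> V1 \<and> b \<in> V1"
    and dj1: "\<forall>e\<in>M1. \<forall>e'\<in>M1. e \<noteq> e' \<longrightarrow> e \<inter> e' = {}"
    using assms(1) unfolding mset_ok_def by blast+
  have B: "M2 \<subseteq> E2" "finite M2" "card M2 = t"
    and two2: "\<forall>e\<in>M2. \<exists>a b. e = {a, b} \<and> a \<noteq> b \<and> a \<in> V2 \<and> b \<in> V2"
    and dj2: "\<forall>e\<in>M2. \<forall>e'\<in>M2. e \<noteq> e' \<longrightarrow> e \<inter> e' = {}"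
    using assms(2) unfolding mset_ok_def by blast+
  have sub1: "e \<subseteq> V1" "e \<noteq> {}" if "e \<in> M1" for e
  proof -
    have "\<exists>a b. e = {a, b} \<and> a \<noteq> b \<and> a \<in> V1 \<and> b \<in> V1" using two1 that by (rule bspec)
    then obtain a b where "e = {a, b}" "a \<in> V1" "b \<in> V1" by (elim exE conjE)
    then show "e \<subseteq> V1" "e \<noteq> {}" by auto
  qed
  have sub2: "e \<subseteq> V2" "e \<noteq> {}" if "e \<in> M2" for e
  proof -
    have "\<exists>a b. e = {a, b} \<and> a \<noteq> b \<and> a \<in> V2 \<and> b \<in> V2" using two2 that by (rule bspec)
    then obtain a b where "e = {a, b}" "a \<in> V2" "b \<in> V2" by (elim exE conjE)
    then show "e \<subseteq> V2" "e \<noteq> {}" by auto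
  qed
  have cross: "e \<inter> e' = {}" if "e \<in> M1" "e' \<in> M2" for e e'
    using sub1(1)[OF that(1)] sub2(1)[OF that(2)] assms(3) by blast
  have "M1 \<inter> M2 = {}"
  proof (rule ccontr)
    assume "M1 \<inter> M2 \<noteq> {}"
    then obtain e where "e \<in> M1" "e \<in> M2" by blast
    then show False using cross[of e e] sub1(2) by blast
  qed
  then have "card (M1 \<union> M2) = s + t" using A B card_Un_disjoint by metis
  moreover have "\<forall>e\<in>M1 \<union> M2. \<exists>a b. e = {a, b} \<and> a \<noteq> b \<and> a \<in> V1 \<union> V2 \<and> b \<in> V1 \<union> V2"
  proof
    fix e assume "e \<in> M1 \<union> M2"
    then have "(\<exists>a b. e = {a, b} \<and> a \<noteq> b \<and> a \<in> V1 \<and> b \<in> V1) \<or> (\<exists>a b. e = {a, b} \<and> a \<noteq> b \<and> a \<in> V2 \<and> b \<in> V2)"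
      using two1 two2 by (auto simp del: ex_simps)
    then obtain a b where "e = {a, b} \<and> a \<noteq> b \<and> (a \<in> V1 \<and> b \<in> V1 \<or> a \<in> V2 \<and> b \<in> V2)" by (elim disjE exE) auto
    then show "\<exists>a b. e = {a, b} \<and> a \<noteq> b \<and> a \<in> V1 \<union> V2 \<and> b \<in> V1 \<union> V2" by blast
  qed
  moreover have "\<forall>e\<in>M1 \<union> M2. \<forall>e'\<in>M1 \<union> M2. e \<noteq> e' \<longrightarrow> e \<inter> e' = {}"
    using dj1 dj2 cross by (metis Int_commute Un_iff)
  moreover have "M1 \<union> M2 \<subseteq> E1 \<union> E2" using A B by blast
  ultimately show ?thesis using A B by (intro mset_okI) auto
qed


lemma simple_edgeE:
  assumes "simple_graph F" "e \<in> edges F"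
  obtains u v where "e = {u, v}" "u \<noteq> v" "u \<in> verts F" "v \<in> verts F"
proof -
  have "\<forall>e\<in>edges F. \<exists>u v. e = {u, v} \<and> u \<noteq> v \<and> u \<in> verts F \<and> v \<in> verts F"
    using assms(1) unfolding simple_graph_def by (elim conjE)
  then have "\<exists>u v. e = {u, v} \<and> u \<noteq> v \<and> u \<in> verts F \<and> v \<in> verts F" using assms(2) by (rule bspec)
  then show ?thesis using that by (elim exE conjE)
qed

lemma simple_graphI:
  assumes "finite (verts F)" "\<And>e. e \<in> edges F \<Longrightarrow> \<exists>u v. e = {u, v} \<and> u \<noteq> v \<and> u \<in> verts F \<and> v \<in> verts F"
  shows "simple_graph F"
  unfolding simple_graph_def using assms by (intro conjI ballI)

definition dunion :: "nat graph \<Rightarrow> nat graph \<Rightarrow> nat graph" where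
  "dunion F1 F2 = ((\<lambda>x. 2*x) ` verts F1 \<union> (\<lambda>x. 2*x+1) ` verts F2,
                    image (\<lambda>x. 2*x) ` edges F1 \<union> image (\<lambda>x. 2*x+1) ` edges F2)"

lemma dunion_verts: "verts (dunion F1 F2) = (\<lambda>x. 2*x) ` verts F1 \<union> (\<lambda>x. 2*x+1) ` verts F2"
  by (simp add: dunion_def verts_def)
lemma dunion_edges: "edges (dunion F1 F2) = image (\<lambda>x. 2*x) ` edges F1 \<union> image (\<lambda>x. 2*x+1) ` edges F2"
  by (simp add: dunion_def edges_def)

lemma inj_ev: "inj (\<lambda>x::nat. 2*x)" by (rule injI) simp
lemma inj_od: "inj (\<lambda>x::nat. 2*x+1)" by (rule injI) simp

lemma ev_od_disj: "(\<lambda>x::nat. 2*x) ` A \<inter> (\<lambda>x. 2*x+1) ` B = {}"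
  by auto presburger

lemma simple_dunion:
  assumes "simple_graph F1" "simple_graph F2"
  shows "simple_graph (dunion F1 F2)"
proof (rule simple_graphI)
  show "finite (verts (dunion F1 F2))" using assms unfolding dunion_verts simple_graph_def by simp
next
  fix e assume "e \<in> edges (dunion F1 F2)"
  then consider (a) e1 where "e1 \<in> edges F1" "e = (\<lambda>x. 2*x) ` e1"
    | (b) e2 where "e2 \<in> edges F2" "e = (\<lambda>x. 2*x+1) ` e2"
    unfolding dunion_edges by blast
  then show "\<exists>u v. e = {u, v} \<and> u \<noteq> v \<and> u \<in> verts (dunion F1 F2) \<and> v \<in> verts (dunion F1 F2)"
  proof cases
    case a
    obtain u v where "e1 = {u, v}" "u \<noteq> v" "u \<in> verts F1" "v \<in> verts F1"
      using simple_edgeE[OF assms(1) a(1)] by blast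
    then have "e = {2*u, 2*v} \<and> 2*u \<noteq> 2*v \<and> 2*u \<in> verts (dunion F1 F2) \<and> 2*v \<in> verts (dunion F1 F2)"
      using a(2) unfolding dunion_verts by auto
    then show ?thesis by (intro exI)
  next
    case b
    obtain u v where "e2 = {u, v}" "u \<noteq> v" "u \<in> verts F2" "v \<in> verts F2"
      using simple_edgeE[OF assms(2) b(1)] by blast
    then have "e = {2*u+1, 2*v+1} \<and> 2*u+1 \<noteq> 2*v+1 \<and> 2*u+1 \<in> verts (dunion F1 F2) \<and> 2*v+1 \<in> verts (dunion F1 F2)"
      using b(2) unfolding dunion_verts by auto
    then show ?thesis by (intro exI)
  qed
qed

lemma card_dunion:
  assumes "simple_graph F1" "simple_graph F2"
  shows "card (edges (dunion F1 F2)) = card (edges F1) + card (edges F2)"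
proof -
  have f1: "finite (edges F1)" and f2: "finite (edges F2)"
    using simple_finite_edges[OF assms(1)] simple_finite_edges[OF assms(2)] by auto
  have d: "image (\<lambda>x::nat. 2*x) ` edges F1 \<inter> image (\<lambda>x. 2*x+1) ` edges F2 = {}"
  proof (rule ccontr)
    assume "image (\<lambda>x::nat. 2*x) ` edges F1 \<inter> image (\<lambda>x. 2*x+1) ` edges F2 \<noteq> {}"
    then obtain e1 e2 where e: "e1 \<in> edges F1" "e2 \<in> edges F2" "(\<lambda>x::nat. 2*x) ` e1 = (\<lambda>x. 2*x+1) ` e2"
      by blast
    obtain u v where "e1 = {u, v}" using simple_edgeE[OF assms(1) e(1)] by blast
    then have "2*u \<in> (\<lambda>x. 2*x+1) ` e2" using e(3) by blast
    then show False by auto presburger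
  qed
  have "card (edges (dunion F1 F2)) = card (image (\<lambda>x::nat. 2*x) ` edges F1) + card (image (\<lambda>x. 2*x+1) ` edges F2)"
    unfolding dunion_edges using d f1 f2 by (simp add: card_Un_disjoint)
  also have "\<dots> = card (edges F1) + card (edges F2)"
    using card_image[OF inj_on_subset[OF inj_imageI[OF inj_ev]]] card_image[OF inj_on_subset[OF inj_imageI[OF inj_od]]]
    by simp
  finally show ?thesis .
qed

lemma arrows_dunion:
  assumes a1: "arrows F1 (matching s) H" and a2: "arrows F2 (matching t) H"
  shows "arrows (dunion F1 F2) (matching (s + t)) H"
  unfolding arrows_def
proof (intro allI impI)
  fix R assume R: "R \<subseteq> edges (dunion F1 F2)"
  define R1 where "R1 = {e \<in> edges F1. (\<lambda>x::nat. 2*x) ` e \<in> R}"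
  define R2 where "R2 = {e \<in> edges F2. (\<lambda>x::nat. 2*x+1) ` e \<in> R}"
  have s1: "R1 \<subseteq> edges F1" and s2: "R2 \<subseteq> edges F2" unfolding R1_def R2_def by auto
  have c1: "has_copy (matching s) (verts F1) R1 \<or> has_copy H (verts F1) (edges F1 - R1)"
    using a1[unfolded arrows_def, rule_format, OF s1] .
  have c2: "has_copy (matching t) (verts F2) R2 \<or> has_copy H (verts F2) (edges F2 - R2)"
    using a2[unfolded arrows_def, rule_format, OF s2] .
  show "has_copy (matching (s + t)) (verts (dunion F1 F2)) R \<or>
        has_copy H (verts (dunion F1 F2)) (edges (dunion F1 F2) - R)"
  proof (cases "has_copy H (verts F1) (edges F1 - R1) \<or> has_copy H (verts F2) (edges F2 - R2)")
    case True
    then show ?thesis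
    proof
      assume "has_copy H (verts F1) (edges F1 - R1)"
      from has_copy_image[OF this inj_ev]
      have h: "has_copy H ((\<lambda>x. 2*x) ` verts F1) (image (\<lambda>x. 2*x) ` (edges F1 - R1))" .
      have v: "(\<lambda>x. 2*x) ` verts F1 \<subseteq> verts (dunion F1 F2)" unfolding dunion_verts by (rule Un_upper1)
      have e: "image (\<lambda>x. 2*x) ` (edges F1 - R1) \<subseteq> edges (dunion F1 F2) - R"
      proof
        fix x assume "x \<in> image (\<lambda>x. 2*x) ` (edges F1 - R1)"
        then obtain e where "e \<in> edges F1" "e \<notin> R1" "x = (\<lambda>x. 2*x) ` e" by blast
        then show "x \<in> edges (dunion F1 F2) - R" unfolding dunion_edges R1_def by simp
      qed
      show ?thesis using has_copy_mono[OF h v e] by (rule disjI2)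
    next
      assume "has_copy H (verts F2) (edges F2 - R2)"
      from has_copy_image[OF this inj_od]
      have h: "has_copy H ((\<lambda>x. 2*x+1) ` verts F2) (image (\<lambda>x. 2*x+1) ` (edges F2 - R2))" .
      have v: "(\<lambda>x. 2*x+1) ` verts F2 \<subseteq> verts (dunion F1 F2)" unfolding dunion_verts by (rule Un_upper2)
      have e: "image (\<lambda>x. 2*x+1) ` (edges F2 - R2) \<subseteq> edges (dunion F1 F2) - R"
      proof
        fix x assume "x \<in> image (\<lambda>x. 2*x+1) ` (edges F2 - R2)"
        then obtain e where "e \<in> edges F2" "e \<notin> R2" "x = (\<lambda>x. 2*x+1) ` e" by blast
        then show "x \<in> edges (dunion F1 F2) - R" unfolding dunion_edges R2_def by simp
      qed
      show ?thesis using has_copy_mono[OF h v e] by (rule disjI2)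
    qed
  next
    case False
    then have "has_copy (matching s) (verts F1) R1" "has_copy (matching t) (verts F2) R2"
      using c1 c2 by blast+
    then obtain M1 M2 where m1: "mset_ok (verts F1) R1 M1 s" and m2: "mset_ok (verts F2) R2 M2 t"
      using copy_to_mset by meson
    have mu: "mset_ok ((\<lambda>x. 2*x) ` verts F1 \<union> (\<lambda>x. 2*x+1) ` verts F2)
             (image (\<lambda>x. 2*x) ` R1 \<union> image (\<lambda>x. 2*x+1) ` R2)
             (image (\<lambda>x. 2*x) ` M1 \<union> image (\<lambda>x. 2*x+1) ` M2) (s + t)"
      by (rule mset_ok_union[OF mset_ok_image[OF m1 inj_ev] mset_ok_image[OF m2 inj_od] ev_od_disj])
    have sub: "image (\<lambda>x. 2*x) ` R1 \<union> image (\<lambda>x. 2*x+1) ` R2 \<subseteq> R"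
      unfolding R1_def R2_def by auto
    have "mset_ok (verts (dunion F1 F2)) R
             (image (\<lambda>x. 2*x) ` M1 \<union> image (\<lambda>x. 2*x+1) ` M2) (s + t)"
      using mset_ok_mono[OF mu _ sub] unfolding dunion_verts by simp
    then show ?thesis using mset_to_copy by (intro disjI1)
  qed
qed


lemma arrows_empty0: "arrows ({}, {}) (matching 0) H"
  unfolding arrows_def has_copy_def matching_verts matching_edges by simp

lemma simple_empty: "simple_graph ({}, {})"
  unfolding simple_graph_def verts_def edges_def by simp

lemma has_copy_self: "has_copy H (verts H) (edges H)"
  unfolding has_copy_def by (intro exI[of _ id]) simp

lemma arrows_self1:
  assumes "simple_graph (H :: nat graph)"
  shows "arrows H (matching 1) H"
  unfolding arrows_def
proof (intro allI impI)
  fix R assume R: "R \<subseteq> edges H"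
  show "has_copy (matching 1) (verts H) R \<or> has_copy H (verts H) (edges H - R)"
  proof (cases "R = {}")
    case True
    then show ?thesis using has_copy_self[of H] by (intro disjI2) simp
  next
    case False
    then obtain e where e: "e \<in> R" by blast
    then obtain u v where uv: "e = {u, v}" "u \<noteq> v" "u \<in> verts H" "v \<in> verts H"
      using simple_edgeE[OF assms] R by blast
    have "mset_ok (verts H) R {e} 1"
    proof (rule mset_okI)
      show "\<forall>e'\<in>{e}. \<exists>a b. e' = {a, b} \<and> a \<noteq> b \<and> a \<in> verts H \<and> b \<in> verts H"
        using uv by blast
    qed (use e in auto)
    then show ?thesis using mset_to_copy by (intro disjI1)
  qed
qed

lemma ex_arrows:
  assumes "simple_graph (H :: nat graph)"
  shows "\<exists>F :: nat graph. simple_graph F \<and> arrows F (matching t) H"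
proof (induction t)
  case 0
  show ?case using simple_empty arrows_empty0 by blast
next
  case (Suc t)
  then obtain F :: "nat graph" where "simple_graph F" "arrows F (matching t) H" by blast
  then have "simple_graph (dunion F H) \<and> arrows (dunion F H) (matching (t + 1)) H"
    using simple_dunion[OF _ assms] arrows_dunion[OF _ arrows_self1[OF assms]] by blast
  then show ?case by (intro exI[of _ "dunion F H"]) simp
qed

lemma sr_witness:
  assumes "simple_graph (H :: nat graph)"
  shows "\<exists>F :: nat graph. simple_graph F \<and> arrows F (matching t) H \<and>
           card (edges F) = size_ramsey (matching t) H"
proof -
  obtain F :: "nat graph" where F: "simple_graph F" "arrows F (matching t) H"
    using ex_arrows[OF assms] by blast
  have ex: "\<exists>m. \<exists>F :: nat graph. simple_graph F \<and> arrows F (matching t) H \<and> card (edges F) = m"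
    using F by blast
  show ?thesis unfolding size_ramsey_def by (rule LeastI_ex[OF ex])
qed

lemma sr_le:
  assumes "simple_graph (F :: nat graph)" "arrows F (matching t) H"
  shows "size_ramsey (matching t) H \<le> card (edges F)"
  unfolding size_ramsey_def by (rule Least_le) (use assms in blast)

lemma sr_subadd:
  assumes "simple_graph (H :: nat graph)"
  shows "size_ramsey (matching (s + t)) H \<le> size_ramsey (matching s) H + size_ramsey (matching t) H"
proof -
  obtain F1 :: "nat graph" where F1: "simple_graph F1" "arrows F1 (matching s) H"
      "card (edges F1) = size_ramsey (matching s) H"
    using sr_witness[OF assms] by blast
  obtain F2 :: "nat graph" where F2: "simple_graph F2" "arrows F2 (matching t) H"
      "card (edges F2) = size_ramsey (matching t) H"
    using sr_witness[OF assms] by blast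
  have "size_ramsey (matching (s + t)) H \<le> card (edges (dunion F1 F2))"
    by (rule sr_le[OF simple_dunion[OF F1(1) F2(1)] arrows_dunion[OF F1(2) F2(2)]])
  also have "\<dots> = size_ramsey (matching s) H + size_ramsey (matching t) H"
    using card_dunion[OF F1(1) F2(1)] F1(3) F2(3) by simp
  finally show ?thesis .
qed

lemma sr_one:
  assumes "simple_graph (H :: nat graph)"
  shows "size_ramsey (matching 1) H \<le> card (edges H)"
  by (rule sr_le[OF assms arrows_self1[OF assms]])

lemma sr_zero: "size_ramsey (matching 0) H = 0"
  using sr_le[OF simple_empty arrows_empty0, of H] by (simp add: edges_def)

lemma sr_upper:
  assumes "simple_graph (H :: nat graph)"
  shows "size_ramsey (matching t) H \<le> t * card (edges H)"
proof (induction t)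
  case 0
  then show ?case using sr_zero by simp
next
  case (Suc t)
  have "size_ramsey (matching (t + 1)) H \<le> size_ramsey (matching t) H + size_ramsey (matching 1) H"
    by (rule sr_subadd[OF assms])
  then show ?case using Suc sr_one[OF assms] by simp
qed


definition del_vert :: "nat graph \<Rightarrow> nat \<Rightarrow> nat graph" where
  "del_vert F v = (verts F - {v}, {e \<in> edges F. v \<notin> e})"

lemma del_vert_verts: "verts (del_vert F v) = verts F - {v}"
  by (simp add: del_vert_def verts_def)
lemma del_vert_edges: "edges (del_vert F v) = {e \<in> edges F. v \<notin> e}"
  by (simp add: del_vert_def edges_def)

lemma simple_del:
  assumes "simple_graph F"
  shows "simple_graph (del_vert F v)"
proof (rule simple_graphI)
  show "finite (verts (del_vert F v))"
    using assms unfolding simple_graph_def del_vert_verts by simp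
next
  fix e assume "e \<in> edges (del_vert F v)"
  then have e: "e \<in> edges F" "v \<notin> e" unfolding del_vert_edges by auto
  obtain a b where ab: "e = {a, b}" "a \<noteq> b" "a \<in> verts F" "b \<in> verts F"
    using simple_edgeE[OF assms e(1)] by blast
  then have "e = {a, b} \<and> a \<noteq> b \<and> a \<in> verts (del_vert F v) \<and> b \<in> verts (del_vert F v)"
    using e(2) unfolding del_vert_verts by auto
  then show "\<exists>u w. e = {u, w} \<and> u \<noteq> w \<and> u \<in> verts (del_vert F v) \<and> w \<in> verts (del_vert F v)"
    by (intro exI)
qed

lemma card_del:
  assumes "simple_graph F"
  shows "card (edges (del_vert F v)) + degree F v = card (edges F)"
proof -
  have fin: "finite (edges F)" using simple_finite_edges[OF assms] .
  have "edges F = {e \<in> edges F. v \<notin> e} \<union> {e \<in> edges F. v \<in> e}" by auto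
  moreover have "{e \<in> edges F. v \<notin> e} \<inter> {e \<in> edges F. v \<in> e} = {}" by auto
  ultimately have "card (edges F) = card {e \<in> edges F. v \<notin> e} + card {e \<in> edges F. v \<in> e}"
    using fin by (metis (no_types, lifting) card_Un_disjoint finite_Un)
  then show ?thesis unfolding del_vert_edges degree_def by simp
qed

lemma arrows_del:
  assumes noiso: "\<forall>w\<in>verts H. \<exists>e\<in>edges H. w \<in> e"
    and arr: "arrows F (matching (Suc t)) H"
  shows "arrows (del_vert F v) (matching t) H"
  unfolding arrows_def
proof (intro allI impI)
  fix R' assume R': "R' \<subseteq> edges (del_vert F v)"
  define R where "R = R' \<union> {e \<in> edges F. v \<in> e}"
  have RF: "R \<subseteq> edges F" using R' unfolding R_def del_vert_edges by auto
  have c: "has_copy (matching (Suc t)) (verts F) R \<or> has_copy H (verts F) (edges F - R)"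
    using arr[unfolded arrows_def, rule_format, OF RF] .
  show "has_copy (matching t) (verts (del_vert F v)) R' \<or>
        has_copy H (verts (del_vert F v)) (edges (del_vert F v) - R')"
  proof (cases "has_copy H (verts F) (edges F - R)")
    case True
    then obtain f where f: "inj_on f (verts H)" "f ` verts H \<subseteq> verts F" "\<forall>e\<in>edges H. f ` e \<in> edges F - R"
      unfolding has_copy_def by blast
    have fe: "f ` e \<in> edges (del_vert F v) - R'" if "e \<in> edges H" for e
    proof -
      have "f ` e \<in> edges F" "f ` e \<notin> R" using f(3) that by auto
      then show ?thesis unfolding R_def del_vert_edges by auto
    qed
    have fv: "f ` verts H \<subseteq> verts (del_vert F v)"
    proof
      fix y assume "y \<in> f ` verts H"
      then obtain w where w: "w \<in> verts H" "y = f w" by blast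
      obtain e where e: "e \<in> edges H" "w \<in> e" using noiso w(1) by blast
      have "v \<notin> f ` e" using fe[OF e(1)] unfolding del_vert_edges by auto
      then have "y \<noteq> v" using w(2) e(2) by auto
      then show "y \<in> verts (del_vert F v)" using f(2) w unfolding del_vert_verts by auto
    qed
    have "has_copy H (verts (del_vert F v)) (edges (del_vert F v) - R')"
      unfolding has_copy_def using f(1) fv fe by (intro exI[of _ f] conjI ballI)
    then show ?thesis by (rule disjI2)
  next
    case False
    then have "has_copy (matching (Suc t)) (verts F) R" using c by simp
    then obtain M where M: "mset_ok (verts F) R M (Suc t)" using copy_to_mset by meson
    have MR: "M \<subseteq> R" and finM: "finite M" and cM: "card M = Suc t"
      and two: "\<forall>e\<in>M. \<exists>a b. e = {a, b} \<and> a \<noteq> b \<and> a \<in> verts F \<and> b \<in> verts F"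
      and dj: "\<forall>e\<in>M. \<forall>e'\<in>M. e \<noteq> e' \<longrightarrow> e \<inter> e' = {}"
      using M unfolding mset_ok_def by blast+
    obtain M1 where M1: "M1 \<subseteq> M" "t \<le> card M1" "\<forall>e\<in>M1. v \<notin> e"
    proof (cases "\<exists>e0\<in>M. v \<in> e0")
      case True
      then obtain e0 where e0: "e0 \<in> M" "v \<in> e0" by blast
      have "M - {e0} \<subseteq> M" by blast
      moreover have "t \<le> card (M - {e0})" using cM e0(1) finM by simp
      moreover have "\<forall>e\<in>M - {e0}. v \<notin> e"
      proof
        fix e assume "e \<in> M - {e0}"
        then have "e \<inter> e0 = {}" using dj e0(1) by blast
        then show "v \<notin> e" using e0(2) by blast
      qed
      ultimately show ?thesis using that by blast
    next
      case False
      then show ?thesis using that[of M] cM by auto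
    qed
    obtain M2 where M2: "M2 \<subseteq> M1" "card M2 = t" "finite M2"
      using obtain_subset_with_card_n[OF M1(2)] by blast
    have "mset_ok (verts (del_vert F v)) R' M2 t"
    proof (rule mset_okI)
      show "M2 \<subseteq> R'"
      proof
        fix e assume "e \<in> M2"
        then have "e \<in> R" "v \<notin> e" using M2(1) M1 MR by auto
        then show "e \<in> R'" unfolding R_def by blast
      qed
      show "\<forall>e\<in>M2. \<exists>a b. e = {a, b} \<and> a \<noteq> b \<and> a \<in> verts (del_vert F v) \<and> b \<in> verts (del_vert F v)"
      proof
        fix e assume e: "e \<in> M2"
        then have "e \<in> M" "v \<notin> e" using M2(1) M1 by auto
        have "\<exists>a b. e = {a, b} \<and> a \<noteq> b \<and> a \<in> verts F \<and> b \<in> verts F"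
          using two \<open>e \<in> M\<close> by (rule bspec)
        then obtain a b where "e = {a, b}" "a \<noteq> b" "a \<in> verts F" "b \<in> verts F" by (elim exE conjE)
        then have "e = {a, b} \<and> a \<noteq> b \<and> a \<in> verts (del_vert F v) \<and> b \<in> verts (del_vert F v)"
          using \<open>v \<notin> e\<close> unfolding del_vert_verts by auto
        then show "\<exists>a b. e = {a, b} \<and> a \<noteq> b \<and> a \<in> verts (del_vert F v) \<and> b \<in> verts (del_vert F v)"
          by (intro exI)
      qed
      show "\<forall>e\<in>M2. \<forall>e'\<in>M2. e \<noteq> e' \<longrightarrow> e \<inter> e' = {}"
        using dj M2(1) M1(1) by blast
    qed (use M2 in auto)
    then show ?thesis using mset_to_copy by (intro disjI1)
  qed
qed

lemma degree_copy:
  assumes sH: "simple_graph H" and sF: "simple_graph F"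
    and f: "inj_on f (verts H)" "\<forall>e\<in>edges H. f ` e \<in> edges F" and w: "w \<in> verts H"
  shows "degree H w \<le> degree F (f w)"
proof -
  have sub: "{e \<in> edges H. w \<in> e} \<subseteq> Pow (verts H)"
  proof
    fix e assume "e \<in> {e \<in> edges H. w \<in> e}"
    then have "e \<in> edges H" by simp
    then obtain a b where "e = {a, b}" "a \<in> verts H" "b \<in> verts H" using simple_edgeE[OF sH] by metis
    then show "e \<in> Pow (verts H)" by simp
  qed
  have inj: "inj_on (image f) {e \<in> edges H. w \<in> e}"
    using inj_on_subset[OF inj_on_image_Pow[OF f(1)] sub] .
  have "image f ` {e \<in> edges H. w \<in> e} \<subseteq> {e \<in> edges F. f w \<in> e}" using f(2) by auto
  moreover have "finite {e \<in> edges F. f w \<in> e}" using simple_finite_edges[OF sF] by simp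
  ultimately have "card (image f ` {e \<in> edges H. w \<in> e}) \<le> card {e \<in> edges F. f w \<in> e}"
    by (rule card_mono[rotated])
  then show ?thesis unfolding degree_def using card_image[OF inj] by simp
qed

lemma lower_bound:
  assumes sH: "simple_graph (H :: nat graph)" and noiso: "\<forall>w\<in>verts H. \<exists>e\<in>edges H. w \<in> e"
    and w: "w \<in> verts H"
  shows "simple_graph (F :: nat graph) \<Longrightarrow> arrows F (matching t) H \<Longrightarrow> t * degree H w \<le> card (edges F)"
proof (induction t arbitrary: F)
  case 0
  then show ?case by simp
next
  case (Suc t)
  have "has_copy (matching (Suc t)) (verts F) {} \<or> has_copy H (verts F) (edges F - {})"
    using Suc.prems(2)[unfolded arrows_def, rule_format, of "{}"] by simp
  moreover have "\<not> has_copy (matching (Suc t)) (verts F) {}"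
  proof
    assume "has_copy (matching (Suc t)) (verts F) {}"
    then obtain M where "mset_ok (verts F) {} M (Suc t)" using copy_to_mset by meson
    then show False unfolding mset_ok_def by auto
  qed
  ultimately have "has_copy H (verts F) (edges F)" by simp
  then obtain f where f: "inj_on f (verts H)" "\<forall>e\<in>edges H. f ` e \<in> edges F"
    unfolding has_copy_def by blast
  have dg: "degree H w \<le> degree F (f w)" by (rule degree_copy[OF sH Suc.prems(1) f w])
  have "t * degree H w \<le> card (edges (del_vert F (f w)))"
    using Suc.IH[OF simple_del[OF Suc.prems(1)] arrows_del[OF noiso Suc.prems(2)]] .
  then show ?case using card_del[OF Suc.prems(1), of "f w"] dg by simp
qed

lemma sr_lower:
  assumes sH: "simple_graph (H :: nat graph)" and noiso: "\<forall>w\<in>verts H. \<exists>e\<in>edges H. w \<in> e"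
    and w: "w \<in> verts H"
  shows "t * degree H w \<le> size_ramsey (matching t) H"
proof -
  obtain F :: "nat graph" where F: "simple_graph F" "arrows F (matching t) H"
      "card (edges F) = size_ramsey (matching t) H"
    using sr_witness[OF sH] by blast
  show ?thesis using lower_bound[OF sH noiso w F(1) F(2)] F(3) by simp
qed


lemma sub_mult:
  fixes u :: "nat \<Rightarrow> real"
  assumes sub: "\<And>m n. u (m + n) \<le> u m + u n" and z: "u 0 \<le> 0"
  shows "u (q * k) \<le> real q * u k"
proof (induction q)
  case 0
  then show ?case using z by simp
next
  case (Suc q)
  have "u (Suc q * k) = u (k + q * k)" by simp
  also have "\<dots> \<le> u k + u (q * k)" by (rule sub)
  also have "\<dots> \<le> u k + real q * u k" using Suc by simp
  finally show ?case by (simp add: algebra_simps)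
qed

lemma fekete:
  fixes u :: "nat \<Rightarrow> real"
  assumes sub: "\<And>m n. u (m + n) \<le> u m + u n" and nn: "\<And>n. 0 \<le> u n"
    and ub: "\<And>n. u n \<le> C * real n"
  shows "convergent (\<lambda>n. u n / real n)"
proof -
  define S where "S = (\<lambda>n. u n / real n) ` {1..}"
  define L where "L = Inf S"
  have Sne: "S \<noteq> {}" unfolding S_def by auto
  have bdd: "bdd_below S" unfolding S_def using nn by (intro bdd_belowI[of _ 0]) auto
  have low: "L \<le> u n / real n" if "n \<ge> 1" for n
    unfolding L_def S_def by (rule cInf_lower) (use that bdd[unfolded S_def] in auto)
  have z: "u 0 \<le> 0" using ub[of 0] by simp
  have C0: "0 \<le> C" using ub[of 1] nn[of 1] by simp
  have "(\<lambda>n. u n / real n) \<longlonglongrightarrow> L"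
  proof (rule LIMSEQ_I)
    fix r :: real assume r: "0 < r"
    have "Inf S < L + r / 2" using r unfolding L_def by simp
    then obtain x where "x \<in> S" "x < L + r / 2" using cInf_lessD[OF Sne] by blast
    then obtain k where k: "k \<ge> 1" "u k / real k < L + r / 2" unfolding S_def by auto
    define no where "no = nat \<lceil>2 * C * real k / r\<rceil> + 1"
    have "\<forall>n\<ge>no. norm (u n / real n - L) < r"
    proof (intro allI impI)
      fix n assume n: "n \<ge> no"
      have n1: "n \<ge> 1" using n unfolding no_def by simp
      have npos: "real n > 0" using n1 by simp
      have "2 * C * real k / r \<le> real (nat \<lceil>2 * C * real k / r\<rceil>)" by linarith
      then have "2 * C * real k / r < real n" using n unfolding no_def by linarith
      then have ck: "C * real k / real n < r / 2" using r npos by (simp add: field_simps)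
      define q where "q = n div k"
      define m where "m = n mod k"
      have nqm: "n = q * k + m" unfolding q_def m_def by simp
      have mk: "m < k" unfolding m_def using k(1) by simp
      have "u n \<le> u (q * k) + u m" using sub nqm by simp
      also have "\<dots> \<le> real q * u k + C * real m" using sub_mult[OF sub z, of q k] ub[of m] by simp
      also have "\<dots> \<le> real q * u k + C * real k" using mk C0 by (simp add: mult_left_mono)
      finally have un: "u n \<le> real q * u k + C * real k" .
      have qk: "real q * real k \<le> real n" using nqm by (metis le_add1 of_nat_le_iff of_nat_mult)
      have ukk: "0 \<le> u k / real k" using nn[of k] by simp
      have "real q * u k / real n = (real q * real k / real n) * (u k / real k)"
        using k(1) by (simp add: field_simps)
      also have "\<dots> \<le> 1 * (u k / real k)"
        using qk npos ukk by (intro mult_right_mono) (simp_all add: field_simps)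
      finally have t1: "real q * u k / real n \<le> u k / real k" by simp
      have "u n / real n \<le> real q * u k / real n + C * real k / real n"
        using un npos by (simp add: add_divide_distrib[symmetric] divide_right_mono)
      also have "\<dots> < L + r / 2 + r / 2" using t1 ck k(2) by linarith
      finally have up: "u n / real n < L + r" by simp
      have "L \<le> u n / real n" using low[OF n1] .
      then show "norm (u n / real n - L) < r" using up by simp
    qed
    then show "\<exists>no. \<forall>n\<ge>no. norm (u n / real n - L) < r" by blast
  qed
  then show ?thesis by (rule convergentI)
qed


lemma rinf_bounds:
  assumes sH: "simple_graph (H :: nat graph)" and noiso: "\<forall>w\<in>verts H. \<exists>e\<in>edges H. w \<in> e"
    and w: "w \<in> verts H" and Epos: "card (edges H) > 0"
  shows "real (degree H w) / real (card (edges H)) \<le> r_infty H \<and> r_infty H \<le> 1"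
proof -
  define u where "u t = real (size_ramsey (matching t) H)" for t
  define E where "E = real (card (edges H))"
  have E0: "E > 0" using Epos unfolding E_def by simp
  have sub: "u (m + n) \<le> u m + u n" for m n
    unfolding u_def using sr_subadd[OF sH, of m n] by simp
  have nn: "0 \<le> u n" for n unfolding u_def by simp
  have ub: "u n \<le> E * real n" for n
    unfolding u_def E_def using sr_upper[OF sH, of n] by (simp add: mult.commute flip: of_nat_mult)
  have lb: "real (degree H w) * real n \<le> u n" for n
    unfolding u_def using sr_lower[OF sH noiso w, of n] by (simp add: mult.commute flip: of_nat_mult)
  have conv: "convergent (\<lambda>n. u n / real n)" by (rule fekete[OF sub nn ub])
  define X where "X t = u t / (real t * E)" for t
  have X_eq: "X = (\<lambda>t. (u t / real t) / E)" unfolding X_def by auto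
  have "convergent X"
  proof -
    obtain l where "(\<lambda>n. u n / real n) \<longlonglongrightarrow> l" using conv unfolding convergent_def by blast
    then have "(\<lambda>t. (u t / real t) / E) \<longlonglongrightarrow> l / E" by (intro tendsto_divide) (use E0 in auto)
    then show ?thesis unfolding X_eq by (rule convergentI)
  qed
  then have lim: "X \<longlonglongrightarrow> r_infty H"
    unfolding r_infty_def X_def u_def E_def convergent_LIMSEQ_iff by simp
  have "\<forall>n\<ge>1. X n \<le> 1"
  proof (intro allI impI)
    fix n :: nat assume "n \<ge> 1"
    then have "real n * E > 0" using E0 by simp
    then show "X n \<le> 1" unfolding X_def using ub[of n] by (simp add: field_simps)
  qed
  then have up: "r_infty H \<le> 1" by (intro LIMSEQ_le_const2[OF lim]) blast
  have "\<forall>n\<ge>1. real (degree H w) / E \<le> X n"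
  proof (intro allI impI)
    fix n :: nat assume "n \<ge> 1"
    then have "real n * E > 0" using E0 by simp
    then show "real (degree H w) / E \<le> X n" unfolding X_def using lb[of n] E0 by (simp add: field_simps)
  qed
  then have "real (degree H w) / E \<le> r_infty H" by (intro LIMSEQ_le_const[OF lim]) blast
  then show ?thesis using up unfolding E_def by simp
qed


definition GG :: "nat \<Rightarrow> nat graph" where
  "GG N = ({0..<N}, (\<lambda>i. {0, i}) ` {1..N-2} \<union> {{1, N-1}})"

lemma GG_verts: "verts (GG N) = {0..<N}" by (simp add: GG_def verts_def)
lemma GG_edges: "edges (GG N) = (\<lambda>i. {0, i}) ` {1..N-2} \<union> {{1, N-1}}" by (simp add: GG_def edges_def)

lemma GG_simple: assumes "N \<ge> 4" shows "simple_graph (GG N)"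
proof (rule simple_graphI)
  show "finite (verts (GG N))" unfolding GG_verts by simp
next
  fix e assume "e \<in> edges (GG N)"
  then consider (a) i where "i \<in> {1..N-2}" "e = {0, i}" | (b) "e = {1, N-1}" unfolding GG_edges by blast
  then show "\<exists>u v. e = {u, v} \<and> u \<noteq> v \<and> u \<in> verts (GG N) \<and> v \<in> verts (GG N)"
  proof cases
    case a
    then have "e = {0, i} \<and> 0 \<noteq> i \<and> 0 \<in> verts (GG N) \<and> i \<in> verts (GG N)"
      using assms unfolding GG_verts by auto
    then show ?thesis by (intro exI)
  next
    case b
    then have "e = {1, N-1} \<and> 1 \<noteq> N-1 \<and> 1 \<in> verts (GG N) \<and> N-1 \<in> verts (GG N)"
      using assms unfolding GG_verts by auto
    then show ?thesis by (intro exI)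
  qed
qed

lemma GG_card_verts: "card (verts (GG N)) = N" unfolding GG_verts by simp

lemma GG_deg0: assumes "N \<ge> 4" shows "{e \<in> edges (GG N). 0 \<in> e} = (\<lambda>i. {0, i}) ` {1..N-2}"
  using assms unfolding GG_edges by auto

lemma GG_inj: "inj_on (\<lambda>i::nat. {0, i}) {1..N-2}"
  by (rule inj_onI) (auto simp: doubleton_eq_iff)

lemma GG_degree0: assumes "N \<ge> 4" shows "degree (GG N) 0 = N - 2"
  unfolding degree_def GG_deg0[OF assms] using card_image[OF GG_inj[of N]] by simp

lemma GG_card_edges: assumes "N \<ge> 4" shows "card (edges (GG N)) = N - 1"
proof -
  have "{1, N-1} \<notin> (\<lambda>i. {0, i}) ` {1..N-2}" by auto
  then have "card (edges (GG N)) = card ((\<lambda>i. {0, i}) ` {1..N-2}) + 1"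
    unfolding GG_edges by simp
  also have "\<dots> = N - 2 + 1" using card_image[OF GG_inj[of N]] by simp
  finally show ?thesis using assms by simp
qed

lemma GG_degree_le: assumes "N \<ge> 4" "v \<in> verts (GG N)" shows "degree (GG N) v \<le> N - 2"
proof (cases "v = 0")
  case True
  then show ?thesis using GG_degree0[OF assms(1)] by simp
next
  case False
  have "{e \<in> edges (GG N). v \<in> e} \<subseteq> {{0, v}, {1, N-1}}"
    using False unfolding GG_edges by auto
  then have "degree (GG N) v \<le> card {{0, v}, {1, N-1::nat}}"
    unfolding degree_def by (rule card_mono[rotated]) simp
  also have "\<dots> \<le> 2" by (simp add: card_insert_le_m1)
  finally show ?thesis using assms(1) by simp
qed

lemma GG_max_degree: assumes "N \<ge> 4" shows "max_degree (GG N) \<le> N - 2"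
  unfolding max_degree_def
proof (subst Max_le_iff)
  show "finite (insert 0 (degree (GG N) ` verts (GG N)))" unfolding GG_verts by simp
  show "insert 0 (degree (GG N) ` verts (GG N)) \<noteq> {}" by simp
  show "\<forall>a\<in>insert 0 (degree (GG N) ` verts (GG N)). a \<le> N - 2"
    using GG_degree_le[OF assms] by auto
qed

lemma GG_noiso: assumes "N \<ge> 4" shows "\<forall>w\<in>verts (GG N). \<exists>e\<in>edges (GG N). w \<in> e"
proof
  fix w assume w: "w \<in> verts (GG N)"
  show "\<exists>e\<in>edges (GG N). w \<in> e"
  proof (cases "w = N - 1")
    case True
    then show ?thesis unfolding GG_edges by auto
  next
    case False
    then have "w \<le> N - 2" using w unfolding GG_verts by auto
    show ?thesis
    proof (cases "w = 0")
      case True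
      have "{0, 1} \<in> edges (GG N)" using assms unfolding GG_edges by auto
      then show ?thesis using True by blast
    next
      case False
      have "{0, w} \<in> edges (GG N)" using \<open>w \<le> N - 2\<close> False unfolding GG_edges by auto
      then show ?thesis by blast
    qed
  qed
qed

lemma GG_adj: assumes "N \<ge> 4" "w \<in> verts (GG N)" shows "(w, 0) \<in> (adj_rel (GG N))\<^sup>*"
proof (cases "w = 0")
  case True
  then show ?thesis by simp
next
  case False
  have a10: "(1, 0) \<in> adj_rel (GG N)"
  proof -
    have "{1, 0} = {0, 1::nat}" by auto
    moreover have "{0, 1} \<in> edges (GG N)" using assms(1) unfolding GG_edges by auto
    ultimately show ?thesis unfolding adj_rel_def by simp
  qed
  show ?thesis
  proof (cases "w = N - 1")
    case True
    have "{N-1, 1} = {1, N-1}" by auto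
    then have "(w, 1) \<in> adj_rel (GG N)" using True unfolding adj_rel_def GG_edges by simp
    then show ?thesis using a10 by (meson r_into_rtrancl rtrancl_trans)
  next
    case nN: False
    have "w \<le> N - 2" using nN assms(2) unfolding GG_verts by auto
    have "{w, 0} = {0, w}" by auto
    moreover have "{0, w} \<in> edges (GG N)" using \<open>w \<le> N - 2\<close> False unfolding GG_edges by auto
    ultimately have "(w, 0) \<in> adj_rel (GG N)" unfolding adj_rel_def by simp
    then show ?thesis by simp
  qed
qed

lemma adj_sym: "(u, v) \<in> adj_rel G \<Longrightarrow> (v, u) \<in> adj_rel G"
  unfolding adj_rel_def by (simp add: insert_commute)

lemma rtrancl_adj_sym: "(u, v) \<in> (adj_rel G)\<^sup>* \<Longrightarrow> (v, u) \<in> (adj_rel G)\<^sup>*"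
proof (induction rule: rtrancl_induct)
  case base
  then show ?case by simp
next
  case (step y z)
  then show ?case using adj_sym by (meson converse_rtrancl_into_rtrancl)
qed

lemma GG_connected: assumes "N \<ge> 4" shows "connected_graph (GG N)"
  unfolding connected_graph_def
proof (intro conjI ballI)
  show "verts (GG N) \<noteq> {}" using assms unfolding GG_verts by auto
next
  fix u v assume uv: "u \<in> verts (GG N)" "v \<in> verts (GG N)"
  have u0: "(u, 0) \<in> (adj_rel (GG N))\<^sup>*" by (rule GG_adj[OF assms uv(1)])
  have "(v, 0) \<in> (adj_rel (GG N))\<^sup>*" by (rule GG_adj[OF assms uv(2)])
  then have "(0, v) \<in> (adj_rel (GG N))\<^sup>*" by (rule rtrancl_adj_sym)
  with u0 show "(u, v) \<in> (adj_rel (GG N))\<^sup>*" by (rule rtrancl_trans)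
qed

lemma GG_bipartite: assumes "N \<ge> 4" shows "bipartite (GG N)"
  unfolding bipartite_def
proof (intro exI[of _ "{0, N-1}"] conjI ballI)
  show "{0, N-1} \<subseteq> verts (GG N)" using assms unfolding GG_verts by auto
next
  fix e assume "e \<in> edges (GG N)"
  then consider (a) i where "i \<in> {1..N-2}" "e = {0, i}" | (b) "e = {1, N-1}" unfolding GG_edges by blast
  then show "card (e \<inter> {0, N-1}) = 1"
  proof cases
    case a
    then have "e \<inter> {0, N-1} = {0}" using assms by auto
    then show ?thesis by simp
  next
    case b
    then have "e \<inter> {0, N-1} = {N-1}" using assms by auto
    then show ?thesis by simp
  qed
qed

lemma GG_rinf:
  assumes N: "N \<ge> 4"
  shows "1 - 2 / real N \<le> r_infty (GG N) \<and> r_infty (GG N) \<le> 1"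
proof -
  have b: "real (degree (GG N) 0) / real (card (edges (GG N))) \<le> r_infty (GG N) \<and> r_infty (GG N) \<le> 1"
  proof (rule rinf_bounds)
    show "simple_graph (GG N)" by (rule GG_simple[OF N])
    show "\<forall>w\<in>verts (GG N). \<exists>e\<in>edges (GG N). w \<in> e" by (rule GG_noiso[OF N])
    show "0 \<in> verts (GG N)" using N unfolding GG_verts by simp
    show "card (edges (GG N)) > 0" using GG_card_edges[OF N] N by simp
  qed
  have r2: "real (N - 2) = real N - 2" and r1: "real (N - 1) = real N - 1" using N by auto
  have "1 - 2 / real N \<le> (real N - 2) / (real N - 1)"
  proof -
    have Np: "real N \<ge> 4" using N by simp
    have "1 - 2 / real N = (real N - 2) / real N" using Np by (simp add: field_simps)
    also have "\<dots> \<le> (real N - 2) / (real N - 1)"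
      using Np by (intro divide_left_mono) auto
    finally show ?thesis .
  qed
  then show ?thesis using b unfolding GG_degree0[OF N] GG_card_edges[OF N] r1 r2 by linarith
qed

theorem corollary3p6:
  shows "\<exists>G :: nat \<Rightarrow> nat graph.
    (\<forall>N\<ge>4. simple_graph (G N) \<and> card (verts (G N)) = N \<and> connected_graph (G N) \<and>
       bipartite (G N) \<and> max_degree (G N) \<le> N - 2) \<and>
    (\<lambda>N. r_infty (G N)) \<longlonglongrightarrow> 1"
proof (intro exI[of _ GG] conjI allI impI)
  fix N :: nat assume N: "N \<ge> 4"
  show "simple_graph (GG N)" by (rule GG_simple[OF N])
  show "card (verts (GG N)) = N" by (rule GG_card_verts)
  show "connected_graph (GG N)" by (rule GG_connected[OF N])
  show "bipartite (GG N)" by (rule GG_bipartite[OF N])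
  show "max_degree (GG N) \<le> N - 2" by (rule GG_max_degree[OF N])
next
  have ev1: "eventually (\<lambda>N. 1 - 2 / real N \<le> r_infty (GG N)) sequentially"
    using GG_rinf eventually_sequentially by blast
  have ev2: "eventually (\<lambda>N. r_infty (GG N) \<le> 1) sequentially"
    using GG_rinf eventually_sequentially by blast
  have l1: "(\<lambda>N. 1 - 2 / real N) \<longlonglongrightarrow> (1 :: real)"
    using tendsto_diff[OF tendsto_const[of "1::real"] lim_const_over_n[of "2::real"]] by simp
  show "(\<lambda>N. r_infty (GG N)) \<longlonglongrightarrow> 1"
    by (rule tendsto_sandwich[OF ev1 ev2 l1 tendsto_const])
qed

end
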